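(* Let $\theta\in\mathbb{R}/\mathbb{Z}$, $\theta\neq0$, and let $\mathbb{L}_{\mathcal{R}(\theta)}$ be the prime renormalization of the rotation $\mathbb{L}_\theta$. Then \[ \mathcal{R}(\theta)=\begin{cases}\dfrac{\theta}{1-\theta}&\text{if }0\le\theta\le\frac12,\\[1ex] \dfrac{2\theta-1}{\theta}&\text{if }\frac12\le\theta\le1.\end{cases} \] Moreover, writing $\theta=[0;a_1,a_2,\dots]=1-[0;b_1,b_2,\dots]$ with all $a_i,b_i$ positive integers, we have \[ \mathcal{R}([0;a_1,a_2,\dots])=\begin{cases}[0;a_1-1,a_2,\dots]&\text{if }a_1>1,\\ 1-[0;a_2,a_3,\dots]&\text{if }a_1=1,\end{cases} \] and \[ \mathcal{R}(1-[0;b_1,b_2,\dots])=\begin{cases}1-[0;b_1-1,b_2,\dots]&\text{if }b_1>1,\\ [0;b_2,b_3,\dots]&\text{if }b_1=1.\end{cases} \]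
   Context: For $\theta\in\mathbb{R}/\mathbb{Z}$ let $\mathbb{L}_\theta:\overline{\mathbb{D}}\to\overline{\mathbb{D}}$, $z\mapsto e^{2\pi i\theta}z$, be the rotation of the closed unit disk. Assume $\theta\neq0$ and let $\mathbb{I}$ be a closed internal ray of $\overline{\mathbb{D}}$. A fundamental sector $\mathbb{Y}$ of $\mathbb{L}_\theta$ is the smallest closed sector of $\overline{\mathbb{D}}$ bounded by $\mathbb{I}$ and $\mathbb{L}_\theta(\mathbb{I})$ (if $\theta=1/2$ either sector may be taken); its angle $\omega$ at the vertex $0$ (measured in full turns) is $\theta$ if $\theta\in[0,1/2]$ and $1-\theta$ otherwise. Rotate so that $1\in\overline{\mathbb{D}}\setminus\mathbb{Y}$. Set $\mathbb{Y}_-=\mathbb{L}_\theta^{-1}(\mathbb{Y})$ and $\mathbb{Y}_+=\overline{\mathbb{D}\setminus(\mathbb{Y}\cup\mathbb{Y}_-)}$. Then $(\mathbb{L}_\theta|_{\mathbb{Y}_+},\mathbb{L}^2_\theta|_{\mathbb{Y}_-})$ is the first return map of $\mathbb{Y}_-\cup\mathbb{Y}_+$ to itself. The prime renormalization of $\mathbb{L}_\theta$ is the rotation $\mathbb{L}_{\mathcal{R}(\theta)}$ of $\overline{\mathbb{D}}$ obtained from this pair by the gluing map $\psi:\mathbb{Y}_-\cup\mathbb{Y}_+\to\overline{\mathbb{D}}$, $z\mapsto z^{1/(1-\omega)}$ (argument measured from a boundary ray of the sector $\mathbb{Y}_-\cup\mathbb{Y}_+$), which identifies the two boundary rays of this sector.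 *)

theory Defs
  imports "HOL-Analysis.Analysis"
begin

definition rot :: "real \<Rightarrow> complex \<Rightarrow> complex" where
  "rot \<theta> z = exp (2 * of_real pi * \<i> * of_real \<theta>) * z"

definition sector :: "real \<Rightarrow> real \<Rightarrow> complex set" where
  "sector \<alpha> w = {of_real r * exp (2 * of_real pi * \<i> * of_real (\<alpha> + t)) | r t.
                     0 \<le> r \<and> r \<le> 1 \<and> 0 \<le> t \<and> t \<le> w}"

text \<open>Fundamental sector: smallest closed sector bounded by the ray of angle alpha
  and its image under the rotation (for theta = 1/2 either one).  Here 0 < theta < 1.\<close>
definition fundamental_sector :: "real \<Rightarrow> real \<Rightarrow> complex set \<Rightarrow> bool" where
  "fundamental_sector \<theta> \<alpha> Y \<longleftrightarrow>
     (\<theta> \<le> 1/2 \<and> Y = sector \<alpha> \<theta>) \<or> (\<theta> \<ge> 1/2 \<and> Y = sector (\<alpha> + \<theta>) (1 - \<theta>))"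

definition sector_angle :: "real \<Rightarrow> real" where
  "sector_angle \<theta> = (if \<theta> \<le> 1/2 then \<theta> else 1 - \<theta>)"

definition rel_arg :: "real \<Rightarrow> complex \<Rightarrow> real" where
  "rel_arg \<beta> z = (THE t. 0 \<le> t \<and> t < 1 \<and>
                      z = of_real (norm z) * exp (2 * of_real pi * \<i> * of_real (\<beta> + t)))"

text \<open>Gluing map z \<mapsto> z^(1/w), argument measured from the boundary ray of angle beta.\<close>
definition glue :: "real \<Rightarrow> real \<Rightarrow> complex \<Rightarrow> complex" where
  "glue \<beta> w z = (if z = 0 then 0 else
      of_real (norm z powr (1 / w)) * exp (2 * of_real pi * \<i> * of_real (rel_arg \<beta> z / w)))"

text \<open>rho is (a rotation number of) the prime renormalization of rot theta:
  for every admissible fundamental sector, the first return map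
  (rot on Y+, rot^2 on Y-) is conjugated by the gluing map to rot rho.\<close>
definition prime_renorm :: "real \<Rightarrow> real \<Rightarrow> bool" where
  "prime_renorm \<theta> \<rho> \<longleftrightarrow>
     (\<forall>\<alpha> Y \<beta>. fundamental_sector \<theta> \<alpha> Y \<and> 1 \<notin> Y \<and>
        rot (-\<theta>) ` Y \<union> closure (ball 0 1 - (Y \<union> rot (-\<theta>) ` Y))
          = sector \<beta> (1 - sector_angle \<theta>) \<longrightarrow>
        (\<forall>z \<in> closure (ball 0 1 - (Y \<union> rot (-\<theta>) ` Y)).
            glue \<beta> (1 - sector_angle \<theta>) (rot \<theta> z) = rot \<rho> (glue \<beta> (1 - sector_angle \<theta>) z)) \<and>
        (\<forall>z \<in> rot (-\<theta>) ` Y.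
            glue \<beta> (1 - sector_angle \<theta>) (rot \<theta> (rot \<theta> z)) = rot \<rho> (glue \<beta> (1 - sector_angle \<theta>) z)))"

fun cf :: "nat list \<Rightarrow> real" where
  "cf [] = 0"
| "cf (a # as) = 1 / (real a + cf as)"

definition cf_inf_val :: "(nat \<Rightarrow> nat) \<Rightarrow> real \<Rightarrow> bool" where
  "cf_inf_val a x \<longleftrightarrow> (\<lambda>n. cf (map a [0..<n])) \<longlonglongrightarrow> x"

end

theory Submission
  imports Defs
begin


definition ee :: "real \<Rightarrow> complex" where
  "ee t = exp (2 * of_real pi * \<i> * of_real t)"

lemma ee_add: "ee (x + y) = ee x * ee y"
  unfolding ee_def by (simp add: distrib_left exp_add)

lemma norm_ee [simp]: "norm (ee x) = 1"
  unfolding ee_def by simp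

lemma ee_eq_iff: "ee x = ee y \<longleftrightarrow> x - y \<in> \<int>"
proof -
  have "ee x = ee y \<longleftrightarrow> (\<exists>n::int. 2 * of_real pi * \<i> * of_real x = 2 * of_real pi * \<i> * of_real y + (of_int (2 * n) * pi) * \<i>)"
    unfolding ee_def by (rule exp_eq)
  also have "\<dots> \<longleftrightarrow> (\<exists>n::int. x = y + of_int n)"
  proof -
    have "\<And>n::int. (2 * of_real pi * \<i> * of_real x = 2 * of_real pi * \<i> * of_real y + (of_int (2 * n) * pi) * \<i>) \<longleftrightarrow> x = y + of_int n"
    proof -
      fix n :: int
      have "(2 * of_real pi * \<i> * of_real x = 2 * of_real pi * \<i> * of_real y + (of_int (2 * n) * pi) * \<i>) \<longleftrightarrow>
            (complex_of_real (2*pi*x) * \<i> = complex_of_real (2*pi*y + 2*n*pi) * \<i>)"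
        by (simp add: algebra_simps)
      also have "\<dots> \<longleftrightarrow> 2*pi*x = 2*pi*y + 2*n*pi"
        by (metis complex_i_not_zero mult_cancel_right of_real_eq_iff)
      also have "\<dots> \<longleftrightarrow> (2*pi)*x = (2*pi)*(y + of_int n)"
        by (simp add: algebra_simps)
      also have "\<dots> \<longleftrightarrow> x = y + of_int n"
        using pi_gt_zero by (simp only: mult_cancel_left) simp
      finally show "?thesis n" .
    qed
    then show ?thesis by simp
  qed
  also have "\<dots> \<longleftrightarrow> x - y \<in> \<int>"
    by (metis Ints_cases Ints_of_int add_diff_cancel_left' diff_add_cancel)
  finally show ?thesis .
qed

lemma ee_int: "n \<in> \<int> \<Longrightarrow> ee n = 1"
  using ee_eq_iff[of n 0] by (simp add: ee_def)

lemma ee_shift: "n \<in> \<int> \<Longrightarrow> ee (x + n) = ee x"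
  by (simp add: ee_add ee_int)

lemma rot_ee: "rot \<theta> z = ee \<theta> * z"
  unfolding rot_def ee_def by simp

lemma sector_ee: "sector \<alpha> w = {of_real r * ee (\<alpha> + t) | r t. 0 \<le> r \<and> r \<le> 1 \<and> 0 \<le> t \<and> t \<le> w}"
  unfolding sector_def ee_def by simp

lemma polar_ex: "\<exists>t. 0 \<le> t \<and> t < 1 \<and> z = of_real (norm z) * ee (\<gamma> + t)"
proof (cases "z = 0")
  case True then show ?thesis by (intro exI[of _ 0]) simp
next
  case False
  define \<phi> where "\<phi> = Arg z / (2*pi)"
  define t where "t = frac (\<phi> - \<gamma>)"
  have z: "z = of_real (norm z) * ee \<phi>"
    using Arg_eq[OF False] by (simp add: ee_def \<phi>_def mult.commute)
  have "(\<gamma> + t) - \<phi> \<in> \<int>" unfolding t_def frac_def by simp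
  then have "ee (\<gamma> + t) = ee \<phi>" by (simp add: ee_eq_iff)
  moreover have "0 \<le> t" "t < 1" unfolding t_def by (auto simp: frac_lt_1)
  ultimately show ?thesis using z by metis
qed



lemma sector_rot: "rot \<phi> ` sector \<gamma> l = sector (\<gamma> + \<phi>) l"
proof -
  have "\<And>r t. ee \<phi> * (of_real r * ee (\<gamma> + t)) = of_real r * ee (\<gamma> + \<phi> + t)"
    by (simp add: ee_add algebra_simps)
  show ?thesis
  proof (intro equalityI subsetI)
    fix z assume "z \<in> rot \<phi> ` sector \<gamma> l"
    then obtain r t where "z = ee \<phi> * (of_real r * ee (\<gamma> + t))" "0 \<le> r" "r \<le> 1" "0 \<le> t" "t \<le> l"
      unfolding sector_ee rot_ee by blast
    then show "z \<in> sector (\<gamma> + \<phi>) l" unfolding sector_ee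
      using \<open>\<And>r t. ee \<phi> * (of_real r * ee (\<gamma> + t)) = of_real r * ee (\<gamma> + \<phi> + t)\<close> by blast
  next
    fix z assume "z \<in> sector (\<gamma> + \<phi>) l"
    then obtain r t where "z = of_real r * ee (\<gamma> + \<phi> + t)" "0 \<le> r" "r \<le> 1" "0 \<le> t" "t \<le> l"
      unfolding sector_ee by blast
    moreover have "of_real r * ee (\<gamma> + t) \<in> sector \<gamma> l" unfolding sector_ee using calculation by blast
    ultimately show "z \<in> rot \<phi> ` sector \<gamma> l" unfolding rot_ee
      using \<open>\<And>r t. ee \<phi> * (of_real r * ee (\<gamma> + t)) = of_real r * ee (\<gamma> + \<phi> + t)\<close> by (metis image_eqI)
  qed
qed

lemma sector_shift: "n \<in> \<int> \<Longrightarrow> sector (\<gamma> + n) l = sector \<gamma> l"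
proof -
  assume n: "n \<in> \<int>"
  have "\<And>t. ee (\<gamma> + n + t) = ee (\<gamma> + t)"
    using ee_shift[OF n, of "\<gamma> + t" for t] by (simp add: algebra_simps)
  then show ?thesis unfolding sector_ee by simp
qed

lemma sector_union:
  assumes "0 \<le> a" "0 \<le> b"
  shows "sector \<gamma> a \<union> sector (\<gamma> + a) b = sector \<gamma> (a + b)"
proof (intro equalityI subsetI)
  fix z assume "z \<in> sector \<gamma> a \<union> sector (\<gamma> + a) b"
  then show "z \<in> sector \<gamma> (a + b)"
  proof
    assume "z \<in> sector \<gamma> a"
    then obtain r t where "z = of_real r * ee (\<gamma> + t)" "0 \<le> r" "r \<le> 1" "0 \<le> t" "t \<le> a"
      unfolding sector_ee by blast
    then show ?thesis unfolding sector_ee using assms by force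
  next
    assume "z \<in> sector (\<gamma> + a) b"
    then obtain r t where "z = of_real r * ee (\<gamma> + a + t)" "0 \<le> r" "r \<le> 1" "0 \<le> t" "t \<le> b"
      unfolding sector_ee by blast
    then have "z = of_real r * ee (\<gamma> + (a + t)) \<and> 0 \<le> r \<and> r \<le> 1 \<and> 0 \<le> a + t \<and> a + t \<le> a + b"
      using assms by (simp add: add.assoc)
    then show ?thesis unfolding sector_ee by blast
  qed
next
  fix z assume "z \<in> sector \<gamma> (a + b)"
  then obtain r t where z: "z = of_real r * ee (\<gamma> + t)" "0 \<le> r" "r \<le> 1" "0 \<le> t" "t \<le> a + b"
    unfolding sector_ee by blast
  show "z \<in> sector \<gamma> a \<union> sector (\<gamma> + a) b"
  proof (cases "t \<le> a")
    case True then show ?thesis using z unfolding sector_ee by blast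
  next
    case False
    then have "z = of_real r * ee (\<gamma> + a + (t - a)) \<and> 0 \<le> r \<and> r \<le> 1 \<and> 0 \<le> t - a \<and> t - a \<le> b"
      using z by simp
    then have "z \<in> sector (\<gamma> + a) b" unfolding sector_ee by blast
    then show ?thesis by blast
  qed
qed

lemma norm_polar: "0 \<le> r \<Longrightarrow> norm (of_real r * ee x) = r"
  by (simp add: norm_mult)

lemma polar_unique:
  assumes "0 < r" "of_real r * ee (\<beta> + t) = of_real r' * ee (\<beta> + t')" "0 \<le> r'"
  shows "r' = r \<and> t - t' \<in> \<int>"
proof -
  have "norm (of_real r * ee (\<beta> + t)) = norm (of_real r' * ee (\<beta> + t'))" by (simp only: assms(2))
  then have "r' = r" using assms norm_polar[of r "\<beta> + t"] norm_polar[of r' "\<beta> + t'"] by simp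
  then have "ee (\<beta> + t) = ee (\<beta> + t')" using assms by simp
  then show ?thesis using \<open>r' = r\<close> by (simp add: ee_eq_iff)
qed

lemma int_small: "(x::real) \<in> \<int> \<Longrightarrow> \<bar>x\<bar> < 1 \<Longrightarrow> x = 0"
proof -
  assume "x \<in> \<int>" "\<bar>x\<bar> < 1"
  then obtain n where n: "x = of_int n" by (auto elim: Ints_cases)
  then have "\<bar>n\<bar> < 1" using \<open>\<bar>x\<bar> < 1\<close> by linarith
  then show "x = 0" using n by simp
qed

lemma rel_arg_ee: "rel_arg \<beta> z = (THE t. 0 \<le> t \<and> t < 1 \<and> z = of_real (norm z) * ee (\<beta> + t))"
  unfolding rel_arg_def ee_def by simp

lemma glue_ee: "glue \<beta> w z = (if z = 0 then 0 else of_real (norm z powr (1 / w)) * ee (rel_arg \<beta> z / w))"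
  unfolding glue_def ee_def by simp

lemma rel_arg_polar:
  assumes "0 < r" "0 \<le> t" "t < 1"
  shows "rel_arg \<beta> (of_real r * ee (\<beta> + t)) = t"
  unfolding rel_arg_ee
proof (rule the_equality)
  show "0 \<le> t \<and> t < 1 \<and> of_real r * ee (\<beta> + t) =
    of_real (norm (of_real r * ee (\<beta> + t))) * ee (\<beta> + t)"
    using assms by (simp add: norm_polar)
next
  fix t' assume "0 \<le> t' \<and> t' < 1 \<and> of_real r * ee (\<beta> + t) =
    of_real (norm (of_real r * ee (\<beta> + t))) * ee (\<beta> + t')"
  then have h: "0 \<le> t'" "t' < 1" "of_real r * ee (\<beta> + t) = of_real r * ee (\<beta> + t')"
    using assms by (auto simp: norm_polar)
  then have "t - t' \<in> \<int>" using polar_unique[OF assms(1) h(3)] assms by simp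
  moreover have "\<bar>t - t'\<bar> < 1" using h assms by auto
  ultimately show "t' = t" using int_small by fastforce
qed

lemma glue_polar:
  assumes "0 < r" "0 \<le> t" "t < 1"
  shows "glue \<beta> w (of_real r * ee (\<beta> + t)) = of_real (r powr (1/w)) * ee (t / w)"
proof -
  have "of_real r * ee (\<beta> + t) \<noteq> 0" using assms by (simp add: ee_def)
  then show ?thesis unfolding glue_ee using assms
    by (simp add: rel_arg_polar norm_polar)
qed

lemma glue_zero [simp]: "glue \<beta> w 0 = 0"
  unfolding glue_def by simp

lemma rot_zero [simp]: "rot \<phi> 0 = 0"
  unfolding rot_def by simp

lemma rot_polar: "rot \<phi> (of_real r * ee x) = of_real r * ee (x + \<phi>)"
  by (simp add: rot_ee ee_add)

lemma sector_eq_shift: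
  assumes "sector \<beta> w = sector \<beta>' w" "0 < w" "w < 1"
  shows "\<beta> - \<beta>' \<in> \<int>"
proof -
  define d where "d = frac (\<beta> - \<beta>')"
  have d: "0 \<le> d" "d < 1" unfolding d_def by (auto simp: frac_lt_1)
  have dint: "\<beta> - \<beta>' - d \<in> \<int>" unfolding d_def frac_def by simp
  have key: "\<And>s. 0 \<le> s \<Longrightarrow> s \<le> w \<Longrightarrow> \<exists>u. 0 \<le> u \<and> u \<le> w \<and> d + s - u \<in> \<int>"
  proof -
    fix s assume s: "0 \<le> s" "s \<le> w"
    have "of_real 1 * ee (\<beta> + s) = of_real 1 * ee (\<beta> + s) \<and> (0::real) \<le> 1 \<and> (1::real) \<le> 1 \<and> 0 \<le> s \<and> s \<le> w"
      using s by simp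
    then have "of_real 1 * ee (\<beta> + s) \<in> sector \<beta> w" unfolding sector_ee by blast
    then have "of_real 1 * ee (\<beta> + s) \<in> sector \<beta>' w" using assms by simp
    then obtain r u where ru: "of_real 1 * ee (\<beta> + s) = of_real r * ee (\<beta>' + u)" "0 \<le> r" "0 \<le> u" "u \<le> w"
      unfolding sector_ee by blast
    have "of_real 1 * ee (\<beta>' + ((\<beta> - \<beta>') + s)) = of_real r * ee (\<beta>' + u)" using ru by simp
    from polar_unique[OF _ this ru(2)] have "(\<beta> - \<beta>') + s - u \<in> \<int>" by simp
    moreover have "d + s - u = ((\<beta> - \<beta>') + s - u) - (\<beta> - \<beta>' - d)" by simp
    ultimately have "d + s - u \<in> \<int>" using dint by (metis Ints_diff)
    then show "\<exists>u. 0 \<le> u \<and> u \<le> w \<and> d + s - u \<in> \<int>" using ru by blast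
  qed
  show ?thesis
  proof (cases "d = 0")
    case True then show ?thesis using dint by simp
  next
    case False
    then have dpos: "0 < d" using d by simp
    obtain u0 where u0: "0 \<le> u0" "u0 \<le> w" "d - u0 \<in> \<int>" using key[of 0] assms by auto
    have "\<bar>d - u0\<bar> < 1" using u0 d assms by auto
    then have "d = u0" using int_small[OF u0(3)] by simp
    then have dw: "d \<le> w" using u0 by simp
    obtain u1 where u1: "0 \<le> u1" "u1 \<le> w" "d + w - u1 \<in> \<int>" using key[of w] assms by auto
    have "d + w - u1 > 0" using u1 dpos by simp
    moreover have "d + w - u1 < 2" using u1 d assms by simp
    moreover obtain n where n: "d + w - u1 = of_int n" using u1(3) by (auto elim: Ints_cases)
    ultimately have "0 < n" "n < 2" by linarith+
    then have "n = 1" by simp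
    then have "d + w - u1 = 1" using n by simp
    then have dw2: "1 - d \<le> w" using u1 by simp
    define \<epsilon> where "\<epsilon> = min (1 - w) (1 - d) / 2"
    have eps: "0 < \<epsilon>" "\<epsilon> < 1 - w" "\<epsilon> \<le> 1 - d" using d assms unfolding \<epsilon>_def by auto
    obtain u2 where u2: "0 \<le> u2" "u2 \<le> w" "d + (1 - d - \<epsilon>) - u2 \<in> \<int>"
      using key[of "1 - d - \<epsilon>"] eps dw2 by auto
    have "1 - \<epsilon> - u2 \<in> \<int>" using u2 by simp
    moreover have "\<bar>1 - \<epsilon> - u2\<bar> < 1" using eps u2 assms by auto
    ultimately have "1 - \<epsilon> - u2 = 0" using int_small by blast
    then show ?thesis using eps u2 by simp
  qed
qed



lemma sector_image: "sector \<gamma> l = (\<lambda>p. of_real (fst p) * ee (\<gamma> + snd p)) ` ({0..1} \<times> {0..l})"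
proof (intro equalityI subsetI)
  fix z assume "z \<in> sector \<gamma> l"
  then obtain r t where rt: "z = of_real r * ee (\<gamma> + t)" "0 \<le> r" "r \<le> 1" "0 \<le> t" "t \<le> l"
    unfolding sector_ee by blast
  show "z \<in> (\<lambda>p. of_real (fst p) * ee (\<gamma> + snd p)) ` ({0..1} \<times> {0..l})"
    by (rule image_eqI[where x="(r, t)"]) (use rt in auto)
next
  fix z assume "z \<in> (\<lambda>p. of_real (fst p) * ee (\<gamma> + snd p)) ` ({0..1} \<times> {0..l})"
  then obtain r t where rt: "z = of_real r * ee (\<gamma> + t)" "0 \<le> r" "r \<le> 1" "0 \<le> t" "t \<le> l"
    by auto
  then show "z \<in> sector \<gamma> l" unfolding sector_ee by blast
qed

lemma cont_polar: "continuous_on S (\<lambda>p. of_real (fst p) * ee (\<gamma> + snd p))"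
  unfolding ee_def by (intro continuous_intros)

lemma closed_sector: "closed (sector \<gamma> l)"
proof -
  have "compact ((\<lambda>p. of_real (fst p) * ee (\<gamma> + snd p)) ` ({0..1::real} \<times> {0..l}))"
    by (intro compact_continuous_image cont_polar compact_Times compact_Icc)
  then show ?thesis unfolding sector_image by (rule compact_imp_closed)
qed

lemma ball_sector_one: "ball 0 1 \<subseteq> sector \<gamma> 1"
proof
  fix z :: complex assume "z \<in> ball 0 1"
  then have "norm z \<le> 1" by simp
  obtain t where "0 \<le> t" "t < 1" "z = of_real (norm z) * ee (\<gamma> + t)" using polar_ex by blast
  then have "z = of_real (norm z) * ee (\<gamma> + t) \<and> 0 \<le> norm z \<and> norm z \<le> 1 \<and> 0 \<le> t \<and> t \<le> 1"
    using \<open>norm z \<le> 1\<close> by simp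
  then show "z \<in> sector \<gamma> 1" unfolding sector_ee by blast
qed

lemma closure_complement_sector:
  assumes "0 < l" "l < 1"
  shows "closure (ball 0 1 - sector \<gamma> l) = sector (\<gamma> + l) (1 - l)"
proof (rule equalityI)
  show "closure (ball 0 1 - sector \<gamma> l) \<subseteq> sector (\<gamma> + l) (1 - l)"
  proof (rule closure_minimal[OF _ closed_sector])
    show "ball 0 1 - sector \<gamma> l \<subseteq> sector (\<gamma> + l) (1 - l)"
    proof
      fix z :: complex assume z: "z \<in> ball 0 1 - sector \<gamma> l"
      then have n1: "norm z \<le> 1" by simp
      obtain t where t: "0 \<le> t" "t < 1" "z = of_real (norm z) * ee (\<gamma> + t)" using polar_ex by blast
      show "z \<in> sector (\<gamma> + l) (1 - l)"
      proof (cases "t \<le> l")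
        case True
        then have "z \<in> sector \<gamma> l" unfolding sector_ee using t n1 by (intro CollectI exI conjI) auto
        then show ?thesis using z by simp
      next
        case False
        have "z = of_real (norm z) * ee (\<gamma> + l + (t - l)) \<and> 0 \<le> norm z \<and> norm z \<le> 1 \<and> 0 \<le> t - l \<and> t - l \<le> 1 - l"
          using t n1 False by simp
        then show ?thesis unfolding sector_ee by blast
      qed
    qed
  qed
next
  define f where "f = (\<lambda>p. of_real (fst p) * ee (\<gamma> + l + snd p))"
  define A where "A = {0<..<1::real} \<times> {0<..<1 - l}"
  have cA: "closure A = {0..1} \<times> {0..1 - l}"
    unfolding A_def closure_Times using assms by simp
  have "f ` A \<subseteq> ball 0 1 - sector \<gamma> l"
  proof
    fix z assume "z \<in> f ` A"
    then obtain r t where rt: "0 < r" "r < 1" "0 < t" "t < 1 - l" "z = of_real r * ee (\<gamma> + (l + t))"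
      unfolding A_def f_def by (auto simp: add.assoc)
    have "z \<in> ball 0 1" using rt by (simp add: norm_polar)
    moreover have "z \<notin> sector \<gamma> l"
    proof
      assume "z \<in> sector \<gamma> l"
      then obtain r' u where ru: "z = of_real r' * ee (\<gamma> + u)" "0 \<le> r'" "0 \<le> u" "u \<le> l"
        unfolding sector_ee by blast
      have "l + t - u \<in> \<int>" using polar_unique[of r \<gamma> "l + t" r' u] rt ru by simp
      moreover have "\<bar>l + t - u\<bar> < 1" using rt ru assms by auto
      ultimately have "l + t - u = 0" by (rule int_small)
      then show False using rt ru by simp
    qed
    ultimately show "z \<in> ball 0 1 - sector \<gamma> l" by simp
  qed
  have "f ` closure A \<subseteq> closure (ball 0 1 - sector \<gamma> l)"
  proof (rule image_closure_subset)
    show "continuous_on (closure A) f" unfolding f_def by (rule cont_polar)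
    show "closed (closure (ball 0 1 - sector \<gamma> l))" by simp
    show "f ` A \<subseteq> closure (ball 0 1 - sector \<gamma> l)"
      using \<open>f ` A \<subseteq> ball 0 1 - sector \<gamma> l\<close> closure_subset by blast
  qed
  moreover have "sector (\<gamma> + l) (1 - l) = f ` closure A"
    unfolding cA f_def sector_image by simp
  ultimately show "sector (\<gamma> + l) (1 - l) \<subseteq> closure (ball 0 1 - sector \<gamma> l)" by simp
qed



lemma rot_rot: "rot a (rot b z) = rot (b + a) z"
  by (simp add: rot_ee ee_add algebra_simps)

lemma one_notin_sector:
  assumes "0 < \<gamma>" "\<gamma> + l < 1" "0 \<le> l"
  shows "1 \<notin> sector \<gamma> l"
proof
  assume "1 \<in> sector \<gamma> l"
  then obtain r t where rt: "1 = of_real r * ee (\<gamma> + t)" "0 \<le> r" "0 \<le> t" "t \<le> l"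
    unfolding sector_ee by blast
  have "of_real 1 * ee (0 + 0) = of_real r * ee (0 + (\<gamma> + t))" using rt by (simp add: ee_def)
  from polar_unique[OF _ this rt(2)] have "0 - (\<gamma> + t) \<in> \<int>" by simp
  moreover have "\<bar>0 - (\<gamma> + t)\<bar> < 1" using assms rt by auto
  ultimately have "\<gamma> + t = 0" using int_small by fastforce
  then show False using assms rt by simp
qed

lemma sector_polar_cases:
  assumes "z \<in> sector \<gamma> l" "\<gamma> - \<beta> - c \<in> \<int>"
  shows "z = 0 \<or> (\<exists>r s. 0 < r \<and> 0 \<le> s \<and> s \<le> l \<and> z = of_real r * ee (\<beta> + (c + s)))"
proof -
  obtain r s where rs: "z = of_real r * ee (\<gamma> + s)" "0 \<le> r" "0 \<le> s" "s \<le> l"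
    using assms(1) unfolding sector_ee by blast
  have "(\<gamma> + s) - (\<beta> + (c + s)) \<in> \<int>" using assms(2) by (simp add: algebra_simps)
  then have "ee (\<gamma> + s) = ee (\<beta> + (c + s))" by (simp add: ee_eq_iff)
  show ?thesis
  proof (cases "r = 0")
    case True then show ?thesis using rs by simp
  next
    case False
    then have "0 < r \<and> 0 \<le> s \<and> s \<le> l \<and> z = of_real r * ee (\<beta> + (c + s))"
      using rs \<open>ee (\<gamma> + s) = ee (\<beta> + (c + s))\<close> by simp
    then show ?thesis by blast
  qed
qed

lemma glue_rot_step:
  assumes "0 < r" "0 \<le> t" "t < 1" "0 \<le> t'" "t' < 1" "t' - (t + \<phi>) \<in> \<int>" "(t' - t) / w - \<rho> \<in> \<int>"
  shows "glue \<beta> w (rot \<phi> (of_real r * ee (\<beta> + t))) = rot \<rho> (glue \<beta> w (of_real r * ee (\<beta> + t)))"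
proof -
  have "(\<beta> + t + \<phi>) - (\<beta> + t') \<in> \<int>"
  proof -
    have "(\<beta> + t + \<phi>) - (\<beta> + t') = - (t' - (t + \<phi>))" by simp
    then show ?thesis using assms(6) by (metis Ints_minus)
  qed
  then have "rot \<phi> (of_real r * ee (\<beta> + t)) = of_real r * ee (\<beta> + t')"
    by (simp add: rot_polar ee_eq_iff)
  then have l: "glue \<beta> w (rot \<phi> (of_real r * ee (\<beta> + t))) = of_real (r powr (1/w)) * ee (t' / w)"
    using glue_polar assms by simp
  have r: "rot \<rho> (glue \<beta> w (of_real r * ee (\<beta> + t))) = of_real (r powr (1/w)) * ee (t / w + \<rho>)"
    using glue_polar[OF assms(1-3)] by (simp add: rot_ee ee_add)
  have "t' / w - (t / w + \<rho>) \<in> \<int>" using assms(7) by (simp add: diff_divide_distrib algebra_simps)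
  then have "ee (t' / w) = ee (t / w + \<rho>)" by (simp add: ee_eq_iff)
  then show ?thesis using l r by simp
qed



lemma case_lt:
  assumes th: "0 < \<theta>" "\<theta> < 1/2"
  shows "prime_renorm \<theta> \<rho> \<longleftrightarrow> \<rho> - \<theta> / (1 - \<theta>) \<in> \<int>"
proof -
  have sa: "sector_angle \<theta> = \<theta>" using th by (simp add: sector_angle_def)
  have fs: "\<And>\<alpha> Y. fundamental_sector \<theta> \<alpha> Y \<longleftrightarrow> Y = sector \<alpha> \<theta>"
    using th unfolding fundamental_sector_def by auto
  have Ym: "\<And>\<alpha>. rot (-\<theta>) ` sector \<alpha> \<theta> = sector (\<alpha> - \<theta>) \<theta>"
    using sector_rot by simp
  have U: "\<And>\<alpha>. sector \<alpha> \<theta> \<union> sector (\<alpha> - \<theta>) \<theta> = sector (\<alpha> - \<theta>) (2 * \<theta>)"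
  proof -
    fix \<alpha>
    have "sector (\<alpha> - \<theta>) \<theta> \<union> sector (\<alpha> - \<theta> + \<theta>) \<theta> = sector (\<alpha> - \<theta>) (\<theta> + \<theta>)"
      by (rule sector_union) (use th in auto)
    moreover have "\<alpha> - \<theta> + \<theta> = \<alpha>" "\<theta> + \<theta> = 2 * \<theta>" by simp_all
    ultimately show "sector \<alpha> \<theta> \<union> sector (\<alpha> - \<theta>) \<theta> = sector (\<alpha> - \<theta>) (2 * \<theta>)" by (metis Un_commute)
  qed
  have Yp: "\<And>\<alpha>. closure (ball 0 1 - (sector \<alpha> \<theta> \<union> sector (\<alpha> - \<theta>) \<theta>)) = sector (\<alpha> + \<theta>) (1 - 2 * \<theta>)"
  proof -
    fix \<alpha>
    have "closure (ball 0 1 - sector (\<alpha> - \<theta>) (2 * \<theta>)) = sector (\<alpha> - \<theta> + 2 * \<theta>) (1 - 2 * \<theta>)"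
      by (rule closure_complement_sector) (use th in auto)
    moreover have "\<alpha> - \<theta> + 2 * \<theta> = \<alpha> + \<theta>" by simp
    ultimately show "closure (ball 0 1 - (sector \<alpha> \<theta> \<union> sector (\<alpha> - \<theta>) \<theta>)) = sector (\<alpha> + \<theta>) (1 - 2 * \<theta>)"
      using U by metis
  qed
  have V: "\<And>\<alpha>. sector (\<alpha> - \<theta>) \<theta> \<union> sector (\<alpha> + \<theta>) (1 - 2 * \<theta>) = sector (\<alpha> + \<theta>) (1 - \<theta>)"
  proof -
    fix \<alpha>
    have "sector (\<alpha> + \<theta>) (1 - 2 * \<theta>) \<union> sector (\<alpha> + \<theta> + (1 - 2 * \<theta>)) \<theta> = sector (\<alpha> + \<theta>) (1 - 2 * \<theta> + \<theta>)"
      by (rule sector_union) (use th in auto)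
    moreover have "\<alpha> + \<theta> + (1 - 2 * \<theta>) = (\<alpha> - \<theta>) + 1" by simp
    moreover have "sector ((\<alpha> - \<theta>) + 1) \<theta> = sector (\<alpha> - \<theta>) \<theta>"
      by (rule sector_shift) simp
    moreover have "1 - 2 * \<theta> + \<theta> = 1 - \<theta>" by simp
    ultimately show "sector (\<alpha> - \<theta>) \<theta> \<union> sector (\<alpha> + \<theta>) (1 - 2 * \<theta>) = sector (\<alpha> + \<theta>) (1 - \<theta>)"
      by (metis Un_commute)
  qed
  have Q: "\<And>\<alpha>. rot (-\<theta>) ` sector \<alpha> \<theta> \<union> closure (ball 0 1 - (sector \<alpha> \<theta> \<union> rot (-\<theta>) ` sector \<alpha> \<theta>))
              = sector (\<alpha> + \<theta>) (1 - \<theta>)"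
    using Ym Yp V by simp
  have w0: "0 < 1 - \<theta>" "1 - \<theta> < 1" using th by auto
  show ?thesis
  proof
    assume PR: "prime_renorm \<theta> \<rho>"
    define \<alpha> where "\<alpha> = (1 - \<theta>) / 2"
    have "1 \<notin> sector \<alpha> \<theta>" using th by (intro one_notin_sector) (auto simp: \<alpha>_def field_simps)
    then have "(\<forall>z \<in> closure (ball 0 1 - (sector \<alpha> \<theta> \<union> rot (-\<theta>) ` sector \<alpha> \<theta>)).
            glue (\<alpha> + \<theta>) (1 - \<theta>) (rot \<theta> z) = rot \<rho> (glue (\<alpha> + \<theta>) (1 - \<theta>) z))"
      using PR Q[of \<alpha>] fs[of \<alpha>] unfolding prime_renorm_def sa by blast
    moreover have "of_real 1 * ee (\<alpha> + \<theta> + 0) \<in> closure (ball 0 1 - (sector \<alpha> \<theta> \<union> rot (-\<theta>) ` sector \<alpha> \<theta>))"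
    proof -
      have "of_real 1 * ee (\<alpha> + \<theta> + 0) \<in> sector (\<alpha> + \<theta>) (1 - 2 * \<theta>)"
        unfolding sector_ee using th by (intro CollectI exI[of _ "1::real"] exI[of _ "0::real"]) auto
      then show ?thesis using Ym Yp by simp
    qed
    ultimately have E: "glue (\<alpha> + \<theta>) (1 - \<theta>) (rot \<theta> (of_real 1 * ee (\<alpha> + \<theta> + 0)))
       = rot \<rho> (glue (\<alpha> + \<theta>) (1 - \<theta>) (of_real 1 * ee (\<alpha> + \<theta> + 0)))" by blast
    have "glue (\<alpha> + \<theta>) (1 - \<theta>) (rot \<theta> (of_real 1 * ee (\<alpha> + \<theta> + 0))) = of_real (1 powr (1 / (1 - \<theta>))) * ee (\<theta> / (1 - \<theta>))"
    proof -
      have e1: "rot \<theta> (of_real 1 * ee (\<alpha> + \<theta> + 0)) = of_real 1 * ee ((\<alpha> + \<theta>) + \<theta>)"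
        using rot_polar[of \<theta> 1 "\<alpha> + \<theta> + 0"] by simp
      have "glue (\<alpha> + \<theta>) (1 - \<theta>) (of_real 1 * ee ((\<alpha> + \<theta>) + \<theta>)) = of_real (1 powr (1 / (1 - \<theta>))) * ee (\<theta> / (1 - \<theta>))"
        by (rule glue_polar) (use th in auto)
      then show ?thesis by (simp only: e1)
    qed
    moreover have "glue (\<alpha> + \<theta>) (1 - \<theta>) (of_real 1 * ee (\<alpha> + \<theta> + 0)) = of_real (1 powr (1 / (1 - \<theta>))) * ee (0 / (1 - \<theta>))"
      using glue_polar[of 1 0 "\<alpha> + \<theta>" "1 - \<theta>"] by simp
    ultimately have "ee (\<theta> / (1 - \<theta>)) = ee \<rho>" using E by (simp add: rot_ee ee_def)
    then have "\<theta> / (1 - \<theta>) - \<rho> \<in> \<int>" by (simp add: ee_eq_iff)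
    then show "\<rho> - \<theta> / (1 - \<theta>) \<in> \<int>" by (metis Ints_minus minus_diff_eq)
  next
    assume R: "\<rho> - \<theta> / (1 - \<theta>) \<in> \<int>"
    show "prime_renorm \<theta> \<rho>"
      unfolding prime_renorm_def sa
    proof (intro allI impI)
      fix \<alpha> Y \<beta>
      assume H: "fundamental_sector \<theta> \<alpha> Y \<and> 1 \<notin> Y \<and>
        rot (-\<theta>) ` Y \<union> closure (ball 0 1 - (Y \<union> rot (-\<theta>) ` Y)) = sector \<beta> (1 - \<theta>)"
      then have Y: "Y = sector \<alpha> \<theta>" using fs by blast
      then have "sector (\<alpha> + \<theta>) (1 - \<theta>) = sector \<beta> (1 - \<theta>)" using H Q by simp
      then have ab: "(\<alpha> + \<theta>) - \<beta> \<in> \<int>" using sector_eq_shift w0 by blast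
      have Yp': "closure (ball 0 1 - (Y \<union> rot (-\<theta>) ` Y)) = sector (\<alpha> + \<theta>) (1 - 2 * \<theta>)"
        using Y Ym Yp by simp
      have Ym': "rot (-\<theta>) ` Y = sector (\<alpha> - \<theta>) \<theta>" using Y Ym by simp
      show "(\<forall>z\<in>closure (ball 0 1 - (Y \<union> rot (-\<theta>) ` Y)).
            glue \<beta> (1 - \<theta>) (rot \<theta> z) = rot \<rho> (glue \<beta> (1 - \<theta>) z)) \<and>
        (\<forall>z\<in>rot (-\<theta>) ` Y. glue \<beta> (1 - \<theta>) (rot \<theta> (rot \<theta> z)) = rot \<rho> (glue \<beta> (1 - \<theta>) z))"
      proof (intro conjI ballI)
        fix z assume "z \<in> closure (ball 0 1 - (Y \<union> rot (-\<theta>) ` Y))"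
        then have "z \<in> sector (\<alpha> + \<theta>) (1 - 2 * \<theta>)" using Yp' by simp
        from sector_polar_cases[OF this, of \<beta> 0] ab
        have "z = 0 \<or> (\<exists>r s. 0 < r \<and> 0 \<le> s \<and> s \<le> 1 - 2 * \<theta> \<and> z = of_real r * ee (\<beta> + (0 + s)))" by simp
        then show "glue \<beta> (1 - \<theta>) (rot \<theta> z) = rot \<rho> (glue \<beta> (1 - \<theta>) z)"
        proof
          assume "z = 0" then show ?thesis by simp
        next
          assume "\<exists>r s. 0 < r \<and> 0 \<le> s \<and> s \<le> 1 - 2 * \<theta> \<and> z = of_real r * ee (\<beta> + (0 + s))"
          then obtain r s where rs: "0 < r" "0 \<le> s" "s \<le> 1 - 2 * \<theta>" "z = of_real r * ee (\<beta> + s)" by auto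
          have "(s + \<theta> - s) / (1 - \<theta>) - \<rho> \<in> \<int>"
            using R by (metis Ints_minus minus_diff_eq add_diff_cancel_left' add.commute)
          then show ?thesis unfolding rs(4)
            by (intro glue_rot_step[of r s "s + \<theta>"]) (use rs th in auto)
        qed
      next
        fix z assume "z \<in> rot (-\<theta>) ` Y"
        then have "z \<in> sector (\<alpha> - \<theta>) \<theta>" using Ym' by simp
        moreover have "(\<alpha> - \<theta>) - \<beta> - (1 - 2 * \<theta>) \<in> \<int>"
        proof -
          have "(\<alpha> - \<theta>) - \<beta> - (1 - 2 * \<theta>) = ((\<alpha> + \<theta>) - \<beta>) - 1" by simp
          then show ?thesis using ab by (metis Ints_1 Ints_diff)
        qed
        ultimately have "z = 0 \<or> (\<exists>r s. 0 < r \<and> 0 \<le> s \<and> s \<le> \<theta> \<and> z = of_real r * ee (\<beta> + ((1 - 2 * \<theta>) + s)))"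
          by (rule sector_polar_cases)
        then show "glue \<beta> (1 - \<theta>) (rot \<theta> (rot \<theta> z)) = rot \<rho> (glue \<beta> (1 - \<theta>) z)"
        proof
          assume "z = 0" then show ?thesis by simp
        next
          assume "\<exists>r s. 0 < r \<and> 0 \<le> s \<and> s \<le> \<theta> \<and> z = of_real r * ee (\<beta> + ((1 - 2 * \<theta>) + s))"
          then obtain r s where rs: "0 < r" "0 \<le> s" "s \<le> \<theta>" "z = of_real r * ee (\<beta> + ((1 - 2 * \<theta>) + s))" by auto
          have eq: "(s - (1 - 2 * \<theta> + s)) / (1 - \<theta>) - \<rho> = -1 - (\<rho> - \<theta> / (1 - \<theta>))"
            using th by (simp add: field_simps)
          have "(s - (1 - 2 * \<theta> + s)) / (1 - \<theta>) - \<rho> \<in> \<int>"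
            unfolding eq using R by (metis Ints_1 Ints_minus Ints_diff)
          moreover have "s - ((1 - 2 * \<theta> + s) + (\<theta> + \<theta>)) \<in> \<int>" by simp
          ultimately show ?thesis unfolding rs(4) rot_rot
            by (intro glue_rot_step[of r "1 - 2 * \<theta> + s" s]) (use rs th in auto)
        qed
      qed
    qed
  qed
qed



lemma case_gt:
  assumes th: "1/2 < \<theta>" "\<theta> < 1"
  shows "prime_renorm \<theta> \<rho> \<longleftrightarrow> \<rho> - (2 * \<theta> - 1) / \<theta> \<in> \<int>"
proof -
  have sa: "1 - sector_angle \<theta> = \<theta>" using th by (simp add: sector_angle_def)
  have fs: "\<And>\<alpha> Y. fundamental_sector \<theta> \<alpha> Y \<longleftrightarrow> Y = sector (\<alpha> + \<theta>) (1 - \<theta>)"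
    using th unfolding fundamental_sector_def by auto
  have Ym: "\<And>\<alpha>. rot (-\<theta>) ` sector (\<alpha> + \<theta>) (1 - \<theta>) = sector \<alpha> (1 - \<theta>)"
  proof -
    fix \<alpha>
    have "rot (-\<theta>) ` sector (\<alpha> + \<theta>) (1 - \<theta>) = sector (\<alpha> + \<theta> + - \<theta>) (1 - \<theta>)" by (rule sector_rot)
    moreover have "\<alpha> + \<theta> + - \<theta> = \<alpha>" by simp
    ultimately show "rot (-\<theta>) ` sector (\<alpha> + \<theta>) (1 - \<theta>) = sector \<alpha> (1 - \<theta>)" by metis
  qed
  have U: "\<And>\<alpha>. sector (\<alpha> + \<theta>) (1 - \<theta>) \<union> sector \<alpha> (1 - \<theta>) = sector (\<alpha> + \<theta>) ((1 - \<theta>) + (1 - \<theta>))"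
  proof -
    fix \<alpha>
    have "sector (\<alpha> + \<theta>) (1 - \<theta>) \<union> sector (\<alpha> + \<theta> + (1 - \<theta>)) (1 - \<theta>) = sector (\<alpha> + \<theta>) ((1 - \<theta>) + (1 - \<theta>))"
      by (rule sector_union) (use th in auto)
    moreover have "\<alpha> + \<theta> + (1 - \<theta>) = \<alpha> + 1" by simp
    moreover have "sector (\<alpha> + 1) (1 - \<theta>) = sector \<alpha> (1 - \<theta>)" by (rule sector_shift) simp
    ultimately show "sector (\<alpha> + \<theta>) (1 - \<theta>) \<union> sector \<alpha> (1 - \<theta>) = sector (\<alpha> + \<theta>) ((1 - \<theta>) + (1 - \<theta>))"
      by metis
  qed
  have Yp: "\<And>\<alpha>. closure (ball 0 1 - (sector (\<alpha> + \<theta>) (1 - \<theta>) \<union> sector \<alpha> (1 - \<theta>))) = sector (\<alpha> + (1 - \<theta>)) (2 * \<theta> - 1)"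
  proof -
    fix \<alpha>
    have "closure (ball 0 1 - sector (\<alpha> + \<theta>) ((1 - \<theta>) + (1 - \<theta>))) = sector (\<alpha> + \<theta> + ((1 - \<theta>) + (1 - \<theta>))) (1 - ((1 - \<theta>) + (1 - \<theta>)))"
      by (rule closure_complement_sector) (use th in auto)
    moreover have "\<alpha> + \<theta> + ((1 - \<theta>) + (1 - \<theta>)) = (\<alpha> + (1 - \<theta>)) + 1" by simp
    moreover have "1 - ((1 - \<theta>) + (1 - \<theta>)) = 2 * \<theta> - 1" by simp
    moreover have "sector ((\<alpha> + (1 - \<theta>)) + 1) (2 * \<theta> - 1) = sector (\<alpha> + (1 - \<theta>)) (2 * \<theta> - 1)"
      by (rule sector_shift) simp
    ultimately show "closure (ball 0 1 - (sector (\<alpha> + \<theta>) (1 - \<theta>) \<union> sector \<alpha> (1 - \<theta>))) = sector (\<alpha> + (1 - \<theta>)) (2 * \<theta> - 1)"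
      using U by metis
  qed
  have V: "\<And>\<alpha>. sector \<alpha> (1 - \<theta>) \<union> sector (\<alpha> + (1 - \<theta>)) (2 * \<theta> - 1) = sector \<alpha> \<theta>"
  proof -
    fix \<alpha>
    have "sector \<alpha> (1 - \<theta>) \<union> sector (\<alpha> + (1 - \<theta>)) (2 * \<theta> - 1) = sector \<alpha> ((1 - \<theta>) + (2 * \<theta> - 1))"
      by (rule sector_union) (use th in auto)
    moreover have "(1 - \<theta>) + (2 * \<theta> - 1) = \<theta>" by simp
    ultimately show "sector \<alpha> (1 - \<theta>) \<union> sector (\<alpha> + (1 - \<theta>)) (2 * \<theta> - 1) = sector \<alpha> \<theta>" by metis
  qed
  have Q: "\<And>\<alpha>. rot (-\<theta>) ` sector (\<alpha> + \<theta>) (1 - \<theta>) \<union> closure (ball 0 1 - (sector (\<alpha> + \<theta>) (1 - \<theta>) \<union> rot (-\<theta>) ` sector (\<alpha> + \<theta>) (1 - \<theta>)))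
              = sector \<alpha> \<theta>"
    using Ym Yp V by simp
  have w0: "0 < \<theta>" "\<theta> < 1" using th by auto
  show ?thesis
  proof
    assume PR: "prime_renorm \<theta> \<rho>"
    define \<alpha> where "\<alpha> = - \<theta> / 2"
    have "1 \<notin> sector (\<alpha> + \<theta>) (1 - \<theta>)" using th by (intro one_notin_sector) (auto simp: \<alpha>_def field_simps)
    then have "(\<forall>z \<in> rot (-\<theta>) ` sector (\<alpha> + \<theta>) (1 - \<theta>).
            glue \<alpha> \<theta> (rot \<theta> (rot \<theta> z)) = rot \<rho> (glue \<alpha> \<theta> z))"
      using PR Q[of \<alpha>] fs[of \<alpha>] unfolding prime_renorm_def sa by blast
    moreover have "of_real 1 * ee (\<alpha> + 0) \<in> rot (-\<theta>) ` sector (\<alpha> + \<theta>) (1 - \<theta>)"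
    proof -
      have "of_real 1 * ee (\<alpha> + 0) \<in> sector \<alpha> (1 - \<theta>)"
        unfolding sector_ee using th by (intro CollectI exI[of _ "1::real"] exI[of _ "0::real"]) auto
      then show ?thesis using Ym by simp
    qed
    ultimately have E: "glue \<alpha> \<theta> (rot \<theta> (rot \<theta> (of_real 1 * ee (\<alpha> + 0))))
       = rot \<rho> (glue \<alpha> \<theta> (of_real 1 * ee (\<alpha> + 0)))" by blast
    have "glue \<alpha> \<theta> (rot \<theta> (rot \<theta> (of_real 1 * ee (\<alpha> + 0)))) = of_real (1 powr (1 / \<theta>)) * ee ((2 * \<theta> - 1) / \<theta>)"
    proof -
      have "rot \<theta> (rot \<theta> (of_real 1 * ee (\<alpha> + 0))) = of_real 1 * ee ((\<alpha> + (2 * \<theta> - 1)) + 1)"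
        unfolding rot_rot rot_polar by (simp add: algebra_simps)
      also have "\<dots> = of_real 1 * ee (\<alpha> + (2 * \<theta> - 1))" by (simp only: ee_shift[of 1 "\<alpha> + (2 * \<theta> - 1)", OF Ints_1])
      finally have e1: "rot \<theta> (rot \<theta> (of_real 1 * ee (\<alpha> + 0))) = of_real 1 * ee (\<alpha> + (2 * \<theta> - 1))" .
      have "glue \<alpha> \<theta> (of_real 1 * ee (\<alpha> + (2 * \<theta> - 1))) = of_real (1 powr (1 / \<theta>)) * ee ((2 * \<theta> - 1) / \<theta>)"
        by (rule glue_polar) (use th in auto)
      then show ?thesis by (simp only: e1)
    qed
    moreover have "glue \<alpha> \<theta> (of_real 1 * ee (\<alpha> + 0)) = of_real (1 powr (1 / \<theta>)) * ee (0 / \<theta>)"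
      using glue_polar[of 1 0 \<alpha> \<theta>] by simp
    ultimately have "ee ((2 * \<theta> - 1) / \<theta>) = ee \<rho>" using E by (simp add: rot_ee ee_def)
    then have "(2 * \<theta> - 1) / \<theta> - \<rho> \<in> \<int>" by (simp add: ee_eq_iff)
    then show "\<rho> - (2 * \<theta> - 1) / \<theta> \<in> \<int>" by (metis Ints_minus minus_diff_eq)
  next
    assume R: "\<rho> - (2 * \<theta> - 1) / \<theta> \<in> \<int>"
    show "prime_renorm \<theta> \<rho>"
      unfolding prime_renorm_def sa
    proof (intro allI impI)
      fix \<alpha> Y \<beta>
      assume H: "fundamental_sector \<theta> \<alpha> Y \<and> 1 \<notin> Y \<and>
        rot (-\<theta>) ` Y \<union> closure (ball 0 1 - (Y \<union> rot (-\<theta>) ` Y)) = sector \<beta> \<theta>"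
      then have Y: "Y = sector (\<alpha> + \<theta>) (1 - \<theta>)" using fs by blast
      then have "sector \<alpha> \<theta> = sector \<beta> \<theta>" using H Q by simp
      then have ab: "\<alpha> - \<beta> \<in> \<int>" using sector_eq_shift w0 by blast
      have Yp': "closure (ball 0 1 - (Y \<union> rot (-\<theta>) ` Y)) = sector (\<alpha> + (1 - \<theta>)) (2 * \<theta> - 1)"
        using Y Ym Yp by simp
      have Ym': "rot (-\<theta>) ` Y = sector \<alpha> (1 - \<theta>)" using Y Ym by simp
      show "(\<forall>z\<in>closure (ball 0 1 - (Y \<union> rot (-\<theta>) ` Y)).
            glue \<beta> \<theta> (rot \<theta> z) = rot \<rho> (glue \<beta> \<theta> z)) \<and>
        (\<forall>z\<in>rot (-\<theta>) ` Y. glue \<beta> \<theta> (rot \<theta> (rot \<theta> z)) = rot \<rho> (glue \<beta> \<theta> z))"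
      proof (intro conjI ballI)
        fix z assume "z \<in> closure (ball 0 1 - (Y \<union> rot (-\<theta>) ` Y))"
        then have "z \<in> sector (\<alpha> + (1 - \<theta>)) (2 * \<theta> - 1)" using Yp' by simp
        moreover have "(\<alpha> + (1 - \<theta>)) - \<beta> - (1 - \<theta>) \<in> \<int>" using ab by simp
        ultimately have "z = 0 \<or> (\<exists>r s. 0 < r \<and> 0 \<le> s \<and> s \<le> 2 * \<theta> - 1 \<and> z = of_real r * ee (\<beta> + ((1 - \<theta>) + s)))"
          by (rule sector_polar_cases)
        then show "glue \<beta> \<theta> (rot \<theta> z) = rot \<rho> (glue \<beta> \<theta> z)"
        proof
          assume "z = 0" then show ?thesis by simp
        next
          assume "\<exists>r s. 0 < r \<and> 0 \<le> s \<and> s \<le> 2 * \<theta> - 1 \<and> z = of_real r * ee (\<beta> + ((1 - \<theta>) + s))"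
          then obtain r s where rs: "0 < r" "0 \<le> s" "s \<le> 2 * \<theta> - 1" "z = of_real r * ee (\<beta> + ((1 - \<theta>) + s))" by auto
          have eq: "(s - ((1 - \<theta>) + s)) / \<theta> - \<rho> = -1 - (\<rho> - (2 * \<theta> - 1) / \<theta>)"
            using th by (simp add: field_simps)
          have "(s - ((1 - \<theta>) + s)) / \<theta> - \<rho> \<in> \<int>"
            unfolding eq using R by (metis Ints_1 Ints_minus Ints_diff)
          moreover have "s - (((1 - \<theta>) + s) + \<theta>) \<in> \<int>" by simp
          ultimately show ?thesis unfolding rs(4)
            by (intro glue_rot_step[of r "(1 - \<theta>) + s" s]) (use rs th in auto)
        qed
      next
        fix z assume "z \<in> rot (-\<theta>) ` Y"
        then have "z \<in> sector \<alpha> (1 - \<theta>)" using Ym' by simp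
        moreover have "\<alpha> - \<beta> - 0 \<in> \<int>" using ab by simp
        ultimately have "z = 0 \<or> (\<exists>r s. 0 < r \<and> 0 \<le> s \<and> s \<le> 1 - \<theta> \<and> z = of_real r * ee (\<beta> + (0 + s)))"
          by (rule sector_polar_cases)
        then show "glue \<beta> \<theta> (rot \<theta> (rot \<theta> z)) = rot \<rho> (glue \<beta> \<theta> z)"
        proof
          assume "z = 0" then show ?thesis by simp
        next
          assume "\<exists>r s. 0 < r \<and> 0 \<le> s \<and> s \<le> 1 - \<theta> \<and> z = of_real r * ee (\<beta> + (0 + s))"
          then obtain r s where rs: "0 < r" "0 \<le> s" "s \<le> 1 - \<theta>" "z = of_real r * ee (\<beta> + s)" by auto
          have eq: "((s + (2 * \<theta> - 1)) - s) / \<theta> - \<rho> = - (\<rho> - (2 * \<theta> - 1) / \<theta>)"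
            using th by (simp add: field_simps)
          have "((s + (2 * \<theta> - 1)) - s) / \<theta> - \<rho> \<in> \<int>"
            unfolding eq using R by (metis Ints_minus)
          moreover have "(s + (2 * \<theta> - 1)) - (s + (\<theta> + \<theta>)) \<in> \<int>" by simp
          ultimately show ?thesis unfolding rs(4) rot_rot
            by (intro glue_rot_step[of r s "s + (2 * \<theta> - 1)"]) (use rs th in auto)
        qed
      qed
    qed
  qed
qed



lemma case_half:
  "prime_renorm (1/2) \<rho> \<longleftrightarrow> \<rho> \<in> \<int>"
proof -
  have sa: "1 - sector_angle (1/2) = 1/2" by (simp add: sector_angle_def)
  have YU: "\<And>\<gamma>. sector \<gamma> (1/2) \<union> rot (-(1/2)) ` sector \<gamma> (1/2) = sector (\<gamma> - 1/2) 1"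
  proof -
    fix \<gamma> :: real
    have "rot (-(1/2)) ` sector \<gamma> (1/2) = sector (\<gamma> + -(1/2)) (1/2)" by (rule sector_rot)
    moreover have "sector (\<gamma> - 1/2) (1/2) \<union> sector (\<gamma> - 1/2 + 1/2) (1/2) = sector (\<gamma> - 1/2) (1/2 + 1/2)"
      by (rule sector_union) auto
    ultimately show "sector \<gamma> (1/2) \<union> rot (-(1/2)) ` sector \<gamma> (1/2) = sector (\<gamma> - 1/2) 1"
      by (simp add: Un_commute)
  qed
  have Yp: "\<And>\<gamma>. closure (ball 0 1 - (sector \<gamma> (1/2) \<union> rot (-(1/2)) ` sector \<gamma> (1/2))) = {}"
    using YU ball_sector_one by (simp add: Diff_eq_empty_iff)
  have Ym: "\<And>\<gamma>. rot (-(1/2)) ` sector \<gamma> (1/2) = sector (\<gamma> - 1/2) (1/2)"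
    using sector_rot by simp
  have rr: "\<And>z. rot (1/2) (rot (1/2) z) = z"
  proof -
    fix z
    have "rot (1/2) (rot (1/2) z) = ee (1/2 + 1/2) * z" by (simp only: rot_ee ee_add mult.assoc)
    also have "\<dots> = z" by (simp add: ee_int)
    finally show "rot (1/2) (rot (1/2) z) = z" .
  qed
  show ?thesis
  proof
    assume PR: "prime_renorm (1/2) \<rho>"
    define \<alpha> :: real where "\<alpha> = 1/4"
    have f: "fundamental_sector (1/2) \<alpha> (sector \<alpha> (1/2))" unfolding fundamental_sector_def by simp
    have "1 \<notin> sector \<alpha> (1/2)" by (intro one_notin_sector) (auto simp: \<alpha>_def)
    then have "(\<forall>z \<in> rot (-(1/2)) ` sector \<alpha> (1/2).
            glue (\<alpha> - 1/2) (1/2) (rot (1/2) (rot (1/2) z)) = rot \<rho> (glue (\<alpha> - 1/2) (1/2) z))"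
    proof -
      have eq: "rot (-(1/2)) ` sector \<alpha> (1/2) \<union> closure (ball 0 1 - (sector \<alpha> (1/2) \<union> rot (-(1/2)) ` sector \<alpha> (1/2)))
         = sector (\<alpha> - 1/2) (1/2)" unfolding Yp by (simp only: Ym Un_empty_right)
      have "fundamental_sector (1/2) \<alpha> (sector \<alpha> (1/2)) \<and> 1 \<notin> sector \<alpha> (1/2) \<and>
         rot (-(1/2)) ` sector \<alpha> (1/2) \<union> closure (ball 0 1 - (sector \<alpha> (1/2) \<union> rot (-(1/2)) ` sector \<alpha> (1/2)))
         = sector (\<alpha> - 1/2) (1/2)" using f eq \<open>1 \<notin> sector \<alpha> (1/2)\<close> by blast
      from PR[unfolded prime_renorm_def sa, rule_format, OF this] show ?thesis by blast
    qed
    moreover have "of_real 1 * ee (\<alpha> - 1/2 + 0) \<in> rot (-(1/2)) ` sector \<alpha> (1/2)"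
    proof -
      have "of_real 1 * ee (\<alpha> - 1/2 + 0) \<in> sector (\<alpha> - 1/2) (1/2)"
        unfolding sector_ee by (intro CollectI exI[of _ "1::real"] exI[of _ "0::real"]) auto
      then show ?thesis using Ym by simp
    qed
    ultimately have E: "glue (\<alpha> - 1/2) (1/2) (of_real 1 * ee (\<alpha> - 1/2 + 0))
       = rot \<rho> (glue (\<alpha> - 1/2) (1/2) (of_real 1 * ee (\<alpha> - 1/2 + 0)))" using rr by metis
    have "glue (\<alpha> - 1/2) (1/2) (of_real 1 * ee (\<alpha> - 1/2 + 0)) = of_real (1 powr (1 / (1/2))) * ee (0 / (1/2))"
      by (rule glue_polar) auto
    then have "ee \<rho> = ee 0" using E by (simp add: rot_ee ee_def)
    then show "\<rho> \<in> \<int>" by (simp add: ee_eq_iff)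
  next
    assume R: "\<rho> \<in> \<int>"
    show "prime_renorm (1/2) \<rho>"
      unfolding prime_renorm_def sa
    proof (intro allI impI)
      fix \<alpha> Y \<beta>
      assume H: "fundamental_sector (1/2) \<alpha> Y \<and> 1 \<notin> Y \<and>
        rot (-(1/2)) ` Y \<union> closure (ball 0 1 - (Y \<union> rot (-(1/2)) ` Y)) = sector \<beta> (1/2)"
      then obtain \<gamma> where Y: "Y = sector \<gamma> (1/2)" unfolding fundamental_sector_def by auto
      show "(\<forall>z\<in>closure (ball 0 1 - (Y \<union> rot (-(1/2)) ` Y)).
            glue \<beta> (1/2) (rot (1/2) z) = rot \<rho> (glue \<beta> (1/2) z)) \<and>
        (\<forall>z\<in>rot (-(1/2)) ` Y. glue \<beta> (1/2) (rot (1/2) (rot (1/2) z)) = rot \<rho> (glue \<beta> (1/2) z))"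
      proof (intro conjI ballI)
        fix z assume "z \<in> closure (ball 0 1 - (Y \<union> rot (-(1/2)) ` Y))"
        then show "glue \<beta> (1/2) (rot (1/2) z) = rot \<rho> (glue \<beta> (1/2) z)"
          unfolding Y Yp by simp
      next
        fix z
        have "ee \<rho> = 1" using R by (rule ee_int)
        then show "glue \<beta> (1/2) (rot (1/2) (rot (1/2) z)) = rot \<rho> (glue \<beta> (1/2) z)"
          by (simp only: rr) (simp add: rot_ee)
      qed
    qed
  qed
qed



lemma cf_range: "(\<forall>a\<in>set as. 0 < a) \<Longrightarrow> 0 \<le> cf as \<and> cf as \<le> 1"
proof (induction as)
  case Nil then show ?case by simp
next
  case (Cons a as)
  then have h: "0 \<le> cf as" "1 \<le> real a" by auto
  then have "1 \<le> real a + cf as" by simp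
  then show ?case using h by (simp add: divide_le_eq_1)
qed

lemma cf_map_Suc: "cf (map a [0..<Suc n]) = 1 / (real (a 0) + cf (map (\<lambda>i. a (Suc i)) [0..<n]))"
proof -
  have "[0..<Suc n] = 0 # map Suc [0..<n]" by (simp add: map_Suc_upt upt_conv_Cons)
  then show ?thesis by (simp add: comp_def)
qed

lemma inf_step:
  assumes pos: "\<forall>i. 0 < a i" and cv: "cf_inf_val a x" and x: "0 < x"
  shows "cf_inf_val (\<lambda>i. a (Suc i)) (1/x - a 0)" "0 \<le> 1/x - a 0" "1/x - a 0 \<le> 1"
    "1 < a 0 \<Longrightarrow> cf_inf_val (a(0 := a 0 - 1)) (1 / (1/x - 1))"
proof -
  define g where "g n = cf (map (\<lambda>i. a (Suc i)) [0..<n])" for n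
  have g01: "0 \<le> g n \<and> g n \<le> 1" for n unfolding g_def using pos by (intro cf_range) auto
  have a1: "1 \<le> real (a 0)" using pos by (simp add: Suc_le_eq)
  have fS: "(\<lambda>n. 1 / (real (a 0) + g n)) \<longlonglongrightarrow> x"
    using LIMSEQ_Suc[OF cv[unfolded cf_inf_val_def]] unfolding cf_map_Suc g_def .
  have ge: "g n = 1 / (1 / (real (a 0) + g n)) - real (a 0)" for n
    using g01[of n] a1 by simp
  have "(\<lambda>n. 1 / (1 / (real (a 0) + g n)) - real (a 0)) \<longlonglongrightarrow> 1/x - a 0"
    by (intro tendsto_intros fS) (use x in simp)
  then have gl: "g \<longlonglongrightarrow> 1/x - a 0" using ge by simp
  then show "cf_inf_val (\<lambda>i. a (Suc i)) (1/x - a 0)" unfolding cf_inf_val_def g_def .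
  show c0: "0 \<le> 1/x - a 0" using gl g01 by (intro LIMSEQ_le_const[OF gl]) auto
  show "1/x - a 0 \<le> 1" using gl g01 by (intro LIMSEQ_le_const2[OF gl]) auto
  assume a0: "1 < a 0"
  have r: "real (a 0 - 1) = real (a 0) - 1" using a0 by simp
  have "cf (map (a(0 := a 0 - 1)) [0..<Suc n]) = 1 / (real (a 0 - 1) + g n)" for n
    unfolding cf_map_Suc g_def by simp
  moreover have "(\<lambda>n. 1 / (real (a 0 - 1) + g n)) \<longlonglongrightarrow> 1 / (real (a 0 - 1) + (1/x - a 0))"
    by (intro tendsto_intros gl) (use c0 a0 r in \<open>cases "x = 1"; simp\<close>)
  moreover have "real (a 0 - 1) + (1/x - a 0) = 1/x - 1" using r by simp
  ultimately have "(\<lambda>n. cf (map (a(0 := a 0 - 1)) [0..<Suc n])) \<longlonglongrightarrow> 1 / (1/x - 1)" by simp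
  then show "cf_inf_val (a(0 := a 0 - 1)) (1 / (1/x - 1))"
    unfolding cf_inf_val_def by (rule LIMSEQ_imp_Suc)
qed



lemma int_shift_iff: "\<rho> - (x::real) \<in> \<int> \<longleftrightarrow> \<rho> - (x + 1) \<in> \<int>"
proof -
  have "\<rho> - (x + 1) = (\<rho> - x) - 1" by simp
  then show ?thesis by (metis Ints_1 Ints_add Ints_diff diff_add_cancel)
qed

lemma charL: "0 < \<theta> \<Longrightarrow> \<theta> \<le> 1/2 \<Longrightarrow> prime_renorm \<theta> \<rho> \<longleftrightarrow> \<rho> - \<theta> / (1 - \<theta>) \<in> \<int>"
proof (cases "\<theta> = 1/2")
  case True
  show ?thesis unfolding True using case_half int_shift_iff[of \<rho> 0] by simp
next
  case False
  then show "0 < \<theta> \<Longrightarrow> \<theta> \<le> 1/2 \<Longrightarrow> ?thesis" using case_lt by simp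
qed

lemma charG: "1/2 \<le> \<theta> \<Longrightarrow> \<theta> < 1 \<Longrightarrow> prime_renorm \<theta> \<rho> \<longleftrightarrow> \<rho> - (2 * \<theta> - 1) / \<theta> \<in> \<int>"
proof (cases "\<theta> = 1/2")
  case True
  show ?thesis unfolding True using case_half by simp
next
  case False
  then show "1/2 \<le> \<theta> \<Longrightarrow> \<theta> < 1 \<Longrightarrow> ?thesis" using case_gt by simp
qed

lemma alg1: "(u::real) > 1 \<Longrightarrow> 1 - 1 / (u - 1) = (2 * (1 - 1/u) - 1) / (1 - 1/u)"
proof -
  assume u: "u > 1"
  then have "1 - 1/u = (u - 1) / u" by (simp add: field_simps)
  moreover have "2 * ((u - 1) / u) - 1 = (u - 2) / u" using u by (simp add: field_simps)
  ultimately have "(2 * (1 - 1/u) - 1) / (1 - 1/u) = (u - 2) / (u - 1)" using u by (simp add: field_simps)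
  also have "\<dots> = 1 - 1 / (u - 1)" using u by (simp add: field_simps)
  finally show ?thesis by simp
qed

lemma fin_a:
  assumes "0 < \<theta>" "\<theta> < 1" "0 < a1" "\<forall>a\<in>set as. 0 < a" "\<theta> = cf (a1 # as)"
  shows "(1 < a1 \<longrightarrow> (\<forall>\<rho>. prime_renorm \<theta> \<rho> \<longleftrightarrow> \<rho> - cf ((a1 - 1) # as) \<in> \<int>)) \<and>
       (a1 = 1 \<longrightarrow> (\<forall>\<rho>. prime_renorm \<theta> \<rho> \<longleftrightarrow> \<rho> - (1 - cf as) \<in> \<int>))"
proof -
  define c where "c = cf as"
  have c: "0 \<le> c" "c \<le> 1" using cf_range[OF assms(4)] c_def by auto
  have th: "\<theta> = 1 / (real a1 + c)" using assms(5) c_def by simp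
  show ?thesis
  proof (intro conjI impI allI)
    fix \<rho> assume a: "1 < a1"
    then have r: "real (a1 - 1) = real a1 - 1" "2 \<le> real a1" by auto
    have u: "2 \<le> real a1 + c" using c r by simp
    have le: "\<theta> \<le> 1/2" unfolding th using u by (simp add: divide_simps)
    have "cf ((a1 - 1) # as) = 1 / ((real a1 + c) - 1)" using r by (simp add: c_def[symmetric] algebra_simps)
    also have "\<dots> = \<theta> / (1 - \<theta>)" unfolding th using u by (simp add: field_simps)
    finally have "cf ((a1 - 1) # as) = \<theta> / (1 - \<theta>)" .
    then show "prime_renorm \<theta> \<rho> \<longleftrightarrow> \<rho> - cf ((a1 - 1) # as) \<in> \<int>" using charL[OF assms(1) le] by simp
  next
    fix \<rho> assume a: "a1 = 1"
    have ge: "1/2 \<le> \<theta>" unfolding th using c a by (simp add: divide_simps)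
    have "1 - c = (2 * \<theta> - 1) / \<theta>" unfolding th using c a by (simp add: field_simps)
    then show "prime_renorm \<theta> \<rho> \<longleftrightarrow> \<rho> - (1 - cf as) \<in> \<int>" using charG[OF ge assms(2)] c_def by simp
  qed
qed

lemma fin_b:
  assumes "0 < \<theta>" "\<theta> < 1" "0 < b1" "\<forall>b\<in>set bs. 0 < b" "\<theta> = 1 - cf (b1 # bs)"
  shows "(1 < b1 \<longrightarrow> (\<forall>\<rho>. prime_renorm \<theta> \<rho> \<longleftrightarrow> \<rho> - (1 - cf ((b1 - 1) # bs)) \<in> \<int>)) \<and>
       (b1 = 1 \<longrightarrow> (\<forall>\<rho>. prime_renorm \<theta> \<rho> \<longleftrightarrow> \<rho> - cf bs \<in> \<int>))"
proof -
  define c where "c = cf bs"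
  have c: "0 \<le> c" "c \<le> 1" using cf_range[OF assms(4)] c_def by auto
  have th: "\<theta> = 1 - 1 / (real b1 + c)" using assms(5) c_def by simp
  show ?thesis
  proof (intro conjI impI allI)
    fix \<rho> assume a: "1 < b1"
    then have r: "real (b1 - 1) = real b1 - 1" "2 \<le> real b1" by auto
    have u: "2 \<le> real b1 + c" using c r by simp
    then have "1 / (real b1 + c) \<le> 1/2" by (simp add: divide_simps)
    then have ge: "1/2 \<le> \<theta>" unfolding th by simp
    have "1 - cf ((b1 - 1) # bs) = 1 - 1 / ((real b1 + c) - 1)" using r by (simp add: c_def[symmetric] algebra_simps)
    also have "\<dots> = (2 * \<theta> - 1) / \<theta>" unfolding th using u by (intro alg1) simp
    finally have "1 - cf ((b1 - 1) # bs) = (2 * \<theta> - 1) / \<theta>" .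
    then show "prime_renorm \<theta> \<rho> \<longleftrightarrow> \<rho> - (1 - cf ((b1 - 1) # bs)) \<in> \<int>" using charG[OF ge assms(2)] by simp
  next
    fix \<rho> assume a: "b1 = 1"
    have le: "\<theta> \<le> 1/2" unfolding th using c a by (simp add: divide_simps)
    have "c = \<theta> / (1 - \<theta>)" unfolding th using c a by (simp add: field_simps)
    then show "prime_renorm \<theta> \<rho> \<longleftrightarrow> \<rho> - cf bs \<in> \<int>" using charL[OF assms(1) le] c_def by simp
  qed
qed

lemma inf_a:
  assumes "0 < \<theta>" "\<theta> < 1" "\<forall>i. 0 < a i" "cf_inf_val a \<theta>"
  shows "(1 < a 0 \<longrightarrow> (\<exists>x. cf_inf_val (a(0 := a 0 - 1)) x \<and>
                         (\<forall>\<rho>. prime_renorm \<theta> \<rho> \<longleftrightarrow> \<rho> - x \<in> \<int>))) \<and>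
       (a 0 = 1 \<longrightarrow> (\<exists>x. cf_inf_val (\<lambda>i. a (Suc i)) x \<and>
                         (\<forall>\<rho>. prime_renorm \<theta> \<rho> \<longleftrightarrow> \<rho> - (1 - x) \<in> \<int>)))"
proof (intro conjI impI)
  note st = inf_step[OF assms(3,4,1)]
  assume a: "1 < a 0"
  have le: "\<theta> \<le> 1/2"
  proof -
    have "2 \<le> real (a 0)" using a by simp
    then have "2 \<le> 1 / \<theta>" using st(2) by simp
    then show ?thesis using assms(1) by (simp add: divide_simps)
  qed
  have "1 / (1/\<theta> - 1) = \<theta> / (1 - \<theta>)" using assms(1,2) by (simp add: field_simps)
  then show "\<exists>x. cf_inf_val (a(0 := a 0 - 1)) x \<and> (\<forall>\<rho>. prime_renorm \<theta> \<rho> \<longleftrightarrow> \<rho> - x \<in> \<int>)"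
    using st(4)[OF a] charL[OF assms(1) le] by (intro exI[of _ "1 / (1/\<theta> - 1)"]) simp
next
  note st = inf_step[OF assms(3,4,1)]
  assume a: "a 0 = 1"
  have ge: "1/2 \<le> \<theta>"
  proof -
    have "1 / \<theta> \<le> 2" using st(3) a by simp
    then show ?thesis using assms(1) by (simp add: divide_simps)
  qed
  have "1 - (1/\<theta> - real (a 0)) = (2 * \<theta> - 1) / \<theta>" using assms(1) a by (simp add: field_simps)
  then show "\<exists>x. cf_inf_val (\<lambda>i. a (Suc i)) x \<and> (\<forall>\<rho>. prime_renorm \<theta> \<rho> \<longleftrightarrow> \<rho> - (1 - x) \<in> \<int>)"
    using st(1) charG[OF ge assms(2)] by (intro exI[of _ "1/\<theta> - real (a 0)"]) simp
qed

lemma inf_b: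
  assumes "0 < \<theta>" "\<theta> < 1" "\<forall>i. 0 < b i" "cf_inf_val b (1 - \<theta>)"
  shows "(1 < b 0 \<longrightarrow> (\<exists>x. cf_inf_val (b(0 := b 0 - 1)) x \<and>
                         (\<forall>\<rho>. prime_renorm \<theta> \<rho> \<longleftrightarrow> \<rho> - (1 - x) \<in> \<int>))) \<and>
       (b 0 = 1 \<longrightarrow> (\<exists>x. cf_inf_val (\<lambda>i. b (Suc i)) x \<and>
                         (\<forall>\<rho>. prime_renorm \<theta> \<rho> \<longleftrightarrow> \<rho> - x \<in> \<int>)))"
proof (intro conjI impI)
  have p: "0 < 1 - \<theta>" using assms(2) by simp
  note st = inf_step[OF assms(3,4) p]
  assume a: "1 < b 0"
  have ge: "1/2 \<le> \<theta>"
  proof -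
    have "2 \<le> real (b 0)" using a by simp
    then have "2 \<le> 1 / (1 - \<theta>)" using st(2) by simp
    then show ?thesis using p by (simp add: divide_simps)
  qed
  have "1 - 1 / (1/(1 - \<theta>) - 1) = (2 * \<theta> - 1) / \<theta>" using assms(1,2) by (simp add: field_simps)
  then show "\<exists>x. cf_inf_val (b(0 := b 0 - 1)) x \<and> (\<forall>\<rho>. prime_renorm \<theta> \<rho> \<longleftrightarrow> \<rho> - (1 - x) \<in> \<int>)"
    using st(4)[OF a] charG[OF ge assms(2)] by (intro exI[of _ "1 / (1/(1 - \<theta>) - 1)"]) simp
next
  have p: "0 < 1 - \<theta>" using assms(2) by simp
  note st = inf_step[OF assms(3,4) p]
  assume a: "b 0 = 1"
  have le: "\<theta> \<le> 1/2"
  proof -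
    have "1 / (1 - \<theta>) \<le> 2" using st(3) a by simp
    then show ?thesis using p by (simp add: divide_simps)
  qed
  have "1/(1 - \<theta>) - real (b 0) = \<theta> / (1 - \<theta>)" using p a by (simp add: field_simps)
  then show "\<exists>x. cf_inf_val (\<lambda>i. b (Suc i)) x \<and> (\<forall>\<rho>. prime_renorm \<theta> \<rho> \<longleftrightarrow> \<rho> - x \<in> \<int>)"
    using st(1) charL[OF assms(1) le] by (intro exI[of _ "1/(1 - \<theta>) - real (b 0)"]) simp
qed


theorem lemmaA1:
  fixes \<theta> :: real
  assumes "0 < \<theta>" and "\<theta> < 1"
  shows
   "(\<theta> \<le> 1/2 \<longrightarrow> (\<forall>\<rho>. prime_renorm \<theta> \<rho> \<longleftrightarrow> \<rho> - \<theta> / (1 - \<theta>) \<in> \<int>)) \<and>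
    (1/2 \<le> \<theta> \<longrightarrow> (\<forall>\<rho>. prime_renorm \<theta> \<rho> \<longleftrightarrow> \<rho> - (2 * \<theta> - 1) / \<theta> \<in> \<int>)) \<and>
    (\<forall>a1 as. 0 < a1 \<and> (\<forall>a \<in> set as. 0 < a) \<and> \<theta> = cf (a1 # as) \<longrightarrow>
       (1 < a1 \<longrightarrow> (\<forall>\<rho>. prime_renorm \<theta> \<rho> \<longleftrightarrow> \<rho> - cf ((a1 - 1) # as) \<in> \<int>)) \<and>
       (a1 = 1 \<longrightarrow> (\<forall>\<rho>. prime_renorm \<theta> \<rho> \<longleftrightarrow> \<rho> - (1 - cf as) \<in> \<int>))) \<and>
    (\<forall>b1 bs. 0 < b1 \<and> (\<forall>b \<in> set bs. 0 < b) \<and> \<theta> = 1 - cf (b1 # bs) \<longrightarrow>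
       (1 < b1 \<longrightarrow> (\<forall>\<rho>. prime_renorm \<theta> \<rho> \<longleftrightarrow> \<rho> - (1 - cf ((b1 - 1) # bs)) \<in> \<int>)) \<and>
       (b1 = 1 \<longrightarrow> (\<forall>\<rho>. prime_renorm \<theta> \<rho> \<longleftrightarrow> \<rho> - cf bs \<in> \<int>))) \<and>
    (\<forall>a :: nat \<Rightarrow> nat. (\<forall>i. 0 < a i) \<and> cf_inf_val a \<theta> \<longrightarrow>
       (1 < a 0 \<longrightarrow> (\<exists>x. cf_inf_val (a(0 := a 0 - 1)) x \<and>
                         (\<forall>\<rho>. prime_renorm \<theta> \<rho> \<longleftrightarrow> \<rho> - x \<in> \<int>))) \<and>
       (a 0 = 1 \<longrightarrow> (\<exists>x. cf_inf_val (\<lambda>i. a (Suc i)) x \<and>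
                         (\<forall>\<rho>. prime_renorm \<theta> \<rho> \<longleftrightarrow> \<rho> - (1 - x) \<in> \<int>)))) \<and>
    (\<forall>b :: nat \<Rightarrow> nat. (\<forall>i. 0 < b i) \<and> cf_inf_val b (1 - \<theta>) \<longrightarrow>
       (1 < b 0 \<longrightarrow> (\<exists>x. cf_inf_val (b(0 := b 0 - 1)) x \<and>
                         (\<forall>\<rho>. prime_renorm \<theta> \<rho> \<longleftrightarrow> \<rho> - (1 - x) \<in> \<int>))) \<and>
       (b 0 = 1 \<longrightarrow> (\<exists>x. cf_inf_val (\<lambda>i. b (Suc i)) x \<and>
                         (\<forall>\<rho>. prime_renorm \<theta> \<rho> \<longleftrightarrow> \<rho> - x \<in> \<int>))))"
  proof -
  have p: "0 < \<theta>" "\<theta> < 1" by fact+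
  have c1: "\<theta> \<le> 1/2 \<longrightarrow> (\<forall>\<rho>. prime_renorm \<theta> \<rho> \<longleftrightarrow> \<rho> - \<theta> / (1 - \<theta>) \<in> \<int>)"
    using charL[OF p(1)] by blast
  have c2: "1/2 \<le> \<theta> \<longrightarrow> (\<forall>\<rho>. prime_renorm \<theta> \<rho> \<longleftrightarrow> \<rho> - (2 * \<theta> - 1) / \<theta> \<in> \<int>)"
    using charG[OF _ p(2)] by blast
  show ?thesis
    apply (intro conjI c1 c2 allI impI)
         apply (rule fin_a[OF p, THEN conjunct1, rule_format]; simp)
        apply (rule fin_a[OF p, THEN conjunct2, rule_format]; simp)
       apply (rule fin_b[OF p, THEN conjunct1, rule_format]; simp)
      apply (rule fin_b[OF p, THEN conjunct2, rule_format]; simp)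
     apply (rule inf_a[OF p, THEN conjunct1, rule_format]; simp)
    apply (rule inf_a[OF p, THEN conjunct2, rule_format]; simp)
   apply (rule inf_b[OF p, THEN conjunct1, rule_format]; simp)
  apply (rule inf_b[OF p, THEN conjunct2, rule_format]; simp)
  done
qed

end
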